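(* Every $\mathrm{PL}_{\{\neg,\top\}}$-formula $\phi$ is uniquely characterized with respect to $\mathrm{PL}_{\{\neg,\top\}}$ by a set of 2 labeled examples.
   Context: $\top$ is treated as a constant unary Boolean function and $\neg$ is negation. Fix a countably infinite set of propositional variables. $\mathrm{PL}_{\{\neg,\top\}}$ is the set of formulas generated by $\phi::=x\mid\neg\phi\mid\top(\phi)$, with the obvious semantics under truth assignments $V$ (assigning $0$ or $1$ to every variable); two formulas are equivalent if they agree under all assignments. A labeled example is a pair $(V,\mathrm{lab})$ with $V$ a truth assignment and $\mathrm{lab}\in\{0,1\}$; $\phi$ fits it if $\phi$ evaluates to $\mathrm{lab}$ under $V$. A set $E$ of labeled examples uniquely characterizes $\phi$ with respect to a set of formulas $L$ if $\phi$ fits all of $E$ and every formula in $L$ that fits all of $E$ is equivalent to $\phi$. *)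

theory Defs
  imports Main
begin

datatype fml = Var nat | Neg fml | Top fml

type_synonym assignment = "nat \<Rightarrow> bool"

fun eval :: "assignment \<Rightarrow> fml \<Rightarrow> bool" where
  "eval V (Var x) = V x"
| "eval V (Neg \<phi>) = (\<not> eval V \<phi>)"
| "eval V (Top \<phi>) = True"

definition equiv_fml :: "fml \<Rightarrow> fml \<Rightarrow> bool" where
  "equiv_fml \<phi> \<psi> \<longleftrightarrow> (\<forall>V. eval V \<phi> = eval V \<psi>)"

text \<open>A labeled example is a pair (V, lab); labels 0/1 are rendered as False/True.\<close>
type_synonym example = "assignment \<times> bool"

definition fits :: "fml \<Rightarrow> example \<Rightarrow> bool" where
  "fits \<phi> e \<longleftrightarrow> eval (fst e) \<phi> = snd e"

definition uniquely_characterizes :: "example set \<Rightarrow> fml \<Rightarrow> fml set \<Rightarrow> bool" where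
  "uniquely_characterizes E \<phi> L \<longleftrightarrow>
     (\<forall>e\<in>E. fits \<phi> e) \<and>
     (\<forall>\<psi>\<in>L. (\<forall>e\<in>E. fits \<psi> e) \<longrightarrow> equiv_fml \<psi> \<phi>)"

end

theory Submission
  imports Defs
begin

lemma nf: "(\<exists>c. \<forall>V. eval V \<phi> = c) \<or> (\<exists>x p. \<forall>V. eval V \<phi> = (V x = p))"
proof (induction \<phi>)
  case (Var x) then show ?case by (metis eval.simps(1))
next
  case (Neg \<phi>) then show ?case
    by (metis eval.simps(2))
next
  case (Top \<phi>) show ?case by (rule disjI1, rule exI[of _ True], simp)
qed

lemma const_case:
  assumes c: "\<forall>V. eval V \<phi> = c"
  shows "uniquely_characterizes {((\<lambda>_::nat. False), c), ((\<lambda>_. True), c)} \<phi> UNIV"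
  unfolding uniquely_characterizes_def fits_def equiv_fml_def
proof (intro conjI ballI impI allI)
  fix e :: example assume "e \<in> {((\<lambda>_. False), c), ((\<lambda>_. True), c)}"
  then have "e = ((\<lambda>_. False), c) \<or> e = ((\<lambda>_. True), c)" by (simp only: insert_iff empty_iff) simp
  then show "eval (fst e) \<phi> = snd e"
  proof
    assume "e = ((\<lambda>_. False), c)" then show ?thesis using c by simp
  next
    assume "e = ((\<lambda>_. True), c)" then show ?thesis using c by simp
  qed
next
  fix \<psi> V assume h: "\<forall>e\<in>{((\<lambda>_. False), c), ((\<lambda>_. True), c)}. eval (fst e) \<psi> = snd e"
  have a1: "eval (\<lambda>_. False) \<psi> = c" using h[rule_format, of "((\<lambda>_. False), c)"] by simp
  have a2: "eval (\<lambda>_. True) \<psi> = c" using h[rule_format, of "((\<lambda>_. True), c)"] by simp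
  from nf[of \<psi>] show "eval V \<psi> = eval V \<phi>"
  proof
    assume "\<exists>c. \<forall>V. eval V \<psi> = c"
    then obtain c' where c': "\<forall>V. eval V \<psi> = c'" by (elim exE)
    have e1: "eval V \<psi> = c'" "eval (\<lambda>_. False) \<psi> = c'" using c' by simp_all
    have "c' = c" using e1(2) a1 by simp
    then show ?thesis using e1(1) c by simp
  next
    assume "\<exists>x p. \<forall>V. eval V \<psi> = (V x = p)"
    then obtain x p where xp: "\<forall>V. eval V \<psi> = (V x = p)" by (elim exE)
    have "eval (\<lambda>_. False) \<psi> = (False = p)" "eval (\<lambda>_. True) \<psi> = (True = p)"
      using xp by simp_all
    then have False using a1 a2 by simp
    then show ?thesis ..
  qed
qed

lemma lit_case:
  assumes xp: "\<forall>V. eval V \<phi> = (V x = p)"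
  shows "uniquely_characterizes {((\<lambda>_. False), (False = p)), ((\<lambda>z. z = x), (True = p))} \<phi> UNIV"
  unfolding uniquely_characterizes_def fits_def equiv_fml_def
proof (intro conjI ballI impI allI)
  fix e :: example assume "e \<in> {((\<lambda>_. False), (False = p)), ((\<lambda>z. z = x), (True = p))}"
  then have "e = ((\<lambda>_. False), (False = p)) \<or> e = ((\<lambda>z. z = x), (True = p))"
    by (simp only: insert_iff empty_iff) simp
  then show "eval (fst e) \<phi> = snd e"
  proof
    assume "e = ((\<lambda>_. False), (False = p))" then show ?thesis using xp by simp
  next
    assume "e = ((\<lambda>z. z = x), (True = p))" then show ?thesis using xp by simp
  qed
next
  fix \<psi> V assume h: "\<forall>e\<in>{((\<lambda>_. False), (False = p)), ((\<lambda>z. z = x), (True = p))}. eval (fst e) \<psi> = snd e"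
  have a1: "eval (\<lambda>_. False) \<psi> = (False = p)"
    using h[rule_format, of "((\<lambda>_. False), (False = p))"] by simp
  have a2: "eval (\<lambda>z. z = x) \<psi> = (True = p)"
    using h[rule_format, of "((\<lambda>z. z = x), (True = p))"] by simp
  from nf[of \<psi>] show "eval V \<psi> = eval V \<phi>"
  proof
    assume "\<exists>c. \<forall>V. eval V \<psi> = c"
    then obtain c' where c': "\<forall>V. eval V \<psi> = c'" by (elim exE)
    have "eval (\<lambda>_. False) \<psi> = c'" "eval (\<lambda>z. z = x) \<psi> = c'" using c' by simp_all
    then have False using a1 a2 by simp
    then show ?thesis ..
  next
    assume "\<exists>y q. \<forall>V. eval V \<psi> = (V y = q)"
    then obtain y q where yq: "\<forall>V. eval V \<psi> = (V y = q)" by (elim exE)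
    show ?thesis
    proof (cases "y = x")
      case True
      have "eval (\<lambda>_. False) \<psi> = (False = q)" using yq by simp
      then have "q = p" using a1 by simp
      then show ?thesis using yq xp True by simp
    next
      case False
      have "eval (\<lambda>_. False) \<psi> = (False = q)" "eval (\<lambda>z. z = x) \<psi> = (False = q)"
        using yq False by simp_all
      then have False using a1 a2 by simp
      then show ?thesis ..
    qed
  qed
qed

theorem theoremA2:
  fixes \<phi> :: fml
  shows "\<exists>E :: example set. finite E \<and> card E = 2 \<and> uniquely_characterizes E \<phi> UNIV"
proof (cases "\<exists>c. \<forall>V. eval V \<phi> = c")
  case True
  then obtain c where c: "\<forall>V. eval V \<phi> = c" by (elim exE)
  have f: "(\<lambda>_::nat. False) \<noteq> (\<lambda>_. True)"
  proof
    assume h: "(\<lambda>_::nat. False) = (\<lambda>_. True)"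
    have "(\<lambda>_::nat. False) 0 = (\<lambda>_::nat. True) 0" using h by (rule fun_cong)
    then show False by simp
  qed
  have d: "((\<lambda>_::nat. False), c) \<noteq> ((\<lambda>_. True), c)" using f by (simp only: prod.inject) simp
  have "card {((\<lambda>_::nat. False), c), ((\<lambda>_. True), c)} = 2" unfolding card_2_iff
    by (rule exI, rule exI, rule conjI, rule refl, rule d)
  then show ?thesis using const_case[OF c] by (intro exI[of _ "{((\<lambda>_::nat. False), c), ((\<lambda>_. True), c)}"]) simp
next
  case False
  have "\<exists>x p. \<forall>V. eval V \<phi> = (V x = p)" using nf[of \<phi>] False by (elim disjE) simp_all
  then obtain x p where xp: "\<forall>V. eval V \<phi> = (V x = p)" by (elim exE)
  have d: "((\<lambda>_. False), (False = p)) \<noteq> ((\<lambda>z. z = x), (True = p))" by (simp only: prod.inject) simp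
  have "card {((\<lambda>_. False), (False = p)), ((\<lambda>z. z = x), (True = p))} = 2" unfolding card_2_iff
    by (rule exI, rule exI, rule conjI, rule refl, rule d)
  then show ?thesis using lit_case[OF xp]
    by (intro exI[of _ "{((\<lambda>_. False), (False = p)), ((\<lambda>z. z = x), (True = p))}"]) simp
qed

end
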